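(* Let $\models$ be an intersective mixed consequence truth-relation on a finite set $V$ of truth values (constant expressive setting). Then $\models$ admits a G-conditional iff every minimal representation $\models_{\mathcal{D}_p^1,\mathcal{D}_c^1}\cap\dots\cap\models_{\mathcal{D}_p^K,\mathcal{D}_c^K}$ of it satisfies the following, where the list of sets of designated values is $\mathcal{D}_p^1,\mathcal{D}_c^1,\dots,\mathcal{D}_p^K,\mathcal{D}_c^K$: (DC1) for each set $\mathcal{D}_i$ in the list, either some truth value belongs to $\mathcal{D}_i$ and to no other set in the list, or $\mathcal{D}_i$ is included in another, distinct set of the list; (DC2) for every non-empty sublist $\mathcal{D}'_1,\dots,\mathcal{D}'_{n'}$ there is $x\in V$ such that for every set $\mathcal{D}_i$ of the list: $x\in\mathcal{D}_i$ iff $\exists i'$ with $\mathcal{D}'_{i'}\subseteq\mathcal{D}_i$; (N1) for $i\neq j$ there is no inclusion $\mathcal{D}_p^i\subseteq\mathcal{D}_p^j$ nor $\mathcal{D}_c^i\subseteq\mathcal{D}_c^j$; (N2) for all $i,j$: if $\mathcal{D}_p^i\subseteq\mathcal{D}_c^j$ then $\mathcal{D}_p^j\subseteq\mathcal{D}_c^i$, and if $\mathcal{D}_c^j\subseteq\mathcal{D}_p^i$ then $\mathcal{D}_c^i\subseteq\mathcal{D}_p^j$.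
   Context: $V$ contains distinct $1,0$; sets of designated values: $\mathcal{D}\subseteq V$, $1\in\mathcal{D}$, $0\notin\mathcal{D}$. $\gamma\models_{\mathcal{D}_p,\mathcal{D}_c}\delta$ iff ($\gamma\subseteq\mathcal{D}_p\Rightarrow\delta\cap\mathcal{D}_c\neq\emptyset$). An intersective mixed truth-relation is a finite intersection of such; a representation is a list of mixed relations whose intersection it is, minimal if of least possible length. Semantics: valuations mapping atoms to $V$, connectives interpreted by fixed truth functions, extended compositionally, every assignment to finitely many distinct atoms realized; constant expressive: every value is the constant value of some formula. $\Gamma\vdash\Delta$ iff $v(\Gamma)\models v(\Delta)$ for all $v$. A G-conditional is a binary connective $\to$ (interpreted by some truth function) with, for all $\Gamma,\Delta,A,B$: $\Gamma\vdash\{A\to B\}\cup\Delta$ iff $\Gamma\cup\{A\}\vdash\{B\}\cup\Delta$; and $\Gamma\cup\{A\to B\}\vdash\Delta$ iff ($\Gamma\vdash\{A\}\cup\Delta$ and $\Gamma\cup\{B\}\vdash\Delta$). *)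

theory Defs
  imports Main
begin

text \<open>Truth values: a finite type 'v (so V = UNIV is finite). Designated sets contain
  the value one and not the value zero.\<close>

definition designated :: "'v \<Rightarrow> 'v \<Rightarrow> 'v set \<Rightarrow> bool" where
  "designated one zero D \<longleftrightarrow> one \<in> D \<and> zero \<notin> D"

definition mixed_rel :: "'v set \<Rightarrow> 'v set \<Rightarrow> 'v set \<Rightarrow> 'v set \<Rightarrow> bool" where
  "mixed_rel Dp Dc \<gamma> \<delta> \<longleftrightarrow> (\<gamma> \<subseteq> Dp \<longrightarrow> \<delta> \<inter> Dc \<noteq> {})"

definition inter_rel :: "('v set \<times> 'v set) list \<Rightarrow> 'v set \<Rightarrow> 'v set \<Rightarrow> bool" where
  "inter_rel L \<gamma> \<delta> \<longleftrightarrow> (\<forall>p\<in>set L. mixed_rel (fst p) (snd p) \<gamma> \<delta>)"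

definition representation :: "'v \<Rightarrow> 'v \<Rightarrow> ('v set \<Rightarrow> 'v set \<Rightarrow> bool) \<Rightarrow> ('v set \<times> 'v set) list \<Rightarrow> bool" where
  "representation one zero R L \<longleftrightarrow>
     L \<noteq> [] \<and> (\<forall>p\<in>set L. designated one zero (fst p) \<and> designated one zero (snd p)) \<and>
     R = inter_rel L"

definition intersective_mixed :: "'v \<Rightarrow> 'v \<Rightarrow> ('v set \<Rightarrow> 'v set \<Rightarrow> bool) \<Rightarrow> bool" where
  "intersective_mixed one zero R \<longleftrightarrow> (\<exists>L. representation one zero R L)"

definition minimal_representation :: "'v \<Rightarrow> 'v \<Rightarrow> ('v set \<Rightarrow> 'v set \<Rightarrow> bool) \<Rightarrow> ('v set \<times> 'v set) list \<Rightarrow> bool" where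
  "minimal_representation one zero R L \<longleftrightarrow>
     representation one zero R L \<and>
     (\<forall>L'. representation one zero R L' \<longrightarrow> length L \<le> length L')"

definition flat_list :: "('v set \<times> 'v set) list \<Rightarrow> 'v set list" where
  "flat_list L = concat (map (\<lambda>p. [fst p, snd p]) L)"

definition DC1 :: "('v set \<times> 'v set) list \<Rightarrow> bool" where
  "DC1 L \<longleftrightarrow> (\<forall>D\<in>set (flat_list L).
      (\<exists>x\<in>D. \<forall>D'\<in>set (flat_list L). D' \<noteq> D \<longrightarrow> x \<notin> D')
    \<or> (\<exists>D'\<in>set (flat_list L). D' \<noteq> D \<and> D \<subseteq> D'))"

definition DC2 :: "('v set \<times> 'v set) list \<Rightarrow> bool" where
  "DC2 L \<longleftrightarrow> (\<forall>S. S \<noteq> {} \<and> S \<subseteq> set (flat_list L) \<longrightarrow>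
      (\<exists>x. \<forall>D\<in>set (flat_list L). x \<in> D \<longleftrightarrow> (\<exists>D'\<in>S. D' \<subseteq> D)))"

definition N1 :: "('v set \<times> 'v set) list \<Rightarrow> bool" where
  "N1 L \<longleftrightarrow> (\<forall>i<length L. \<forall>j<length L. i \<noteq> j \<longrightarrow>
      \<not> fst (L ! i) \<subseteq> fst (L ! j) \<and> \<not> snd (L ! i) \<subseteq> snd (L ! j))"

definition N2 :: "('v set \<times> 'v set) list \<Rightarrow> bool" where
  "N2 L \<longleftrightarrow> (\<forall>i<length L. \<forall>j<length L.
      (fst (L ! i) \<subseteq> snd (L ! j) \<longrightarrow> fst (L ! j) \<subseteq> snd (L ! i)) \<and>
      (snd (L ! j) \<subseteq> fst (L ! i) \<longrightarrow> snd (L ! i) \<subseteq> fst (L ! j)))"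

text \<open>Formulas: atoms, arbitrary further connectives (symbols of type 'c, interpreted by
  truth functions on argument lists), and the binary connective Imp.\<close>
datatype 'c form = Atom nat | Op 'c "'c form list" | Imp "'c form" "'c form"

fun eval :: "('c \<Rightarrow> 'v list \<Rightarrow> 'v) \<Rightarrow> ('v \<Rightarrow> 'v \<Rightarrow> 'v) \<Rightarrow> (nat \<Rightarrow> 'v) \<Rightarrow> 'c form \<Rightarrow> 'v" where
  "eval I f v (Atom n) = v n"
| "eval I f v (Op c xs) = I c (map (eval I f v) xs)"
| "eval I f v (Imp a b) = f (eval I f v a) (eval I f v b)"

fun imp_free :: "'c form \<Rightarrow> bool" where
  "imp_free (Atom n) = True"
| "imp_free (Op c xs) = (\<forall>x\<in>set xs. imp_free x)"
| "imp_free (Imp a b) = False"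

definition constant_expressive :: "('c \<Rightarrow> 'v list \<Rightarrow> 'v) \<Rightarrow> bool" where
  "constant_expressive I \<longleftrightarrow>
     (\<forall>x::'v. \<exists>\<phi>. imp_free \<phi> \<and> (\<forall>f v. eval I f v \<phi> = x))"

definition entails :: "('v set \<Rightarrow> 'v set \<Rightarrow> bool) \<Rightarrow> ('c \<Rightarrow> 'v list \<Rightarrow> 'v) \<Rightarrow> ('v \<Rightarrow> 'v \<Rightarrow> 'v)
    \<Rightarrow> 'c form set \<Rightarrow> 'c form set \<Rightarrow> bool" where
  "entails R I f \<Gamma> \<Delta> \<longleftrightarrow> (\<forall>v. R (eval I f v ` \<Gamma>) (eval I f v ` \<Delta>))"

definition G_conditional :: "('v set \<Rightarrow> 'v set \<Rightarrow> bool) \<Rightarrow> ('c \<Rightarrow> 'v list \<Rightarrow> 'v) \<Rightarrow> ('v \<Rightarrow> 'v \<Rightarrow> 'v) \<Rightarrow> bool" where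
  "G_conditional R I f \<longleftrightarrow> (\<forall>\<Gamma> \<Delta> A B.
     (entails R I f \<Gamma> ({Imp A B} \<union> \<Delta>) \<longleftrightarrow> entails R I f (\<Gamma> \<union> {A}) ({B} \<union> \<Delta>)) \<and>
     (entails R I f (\<Gamma> \<union> {Imp A B}) \<Delta> \<longleftrightarrow>
        (entails R I f \<Gamma> ({A} \<union> \<Delta>) \<and> entails R I f (\<Gamma> \<union> {B}) \<Delta>)))"

definition admits_G_conditional :: "('v set \<Rightarrow> 'v set \<Rightarrow> bool) \<Rightarrow> ('c \<Rightarrow> 'v list \<Rightarrow> 'v) \<Rightarrow> bool" where
  "admits_G_conditional R I \<longleftrightarrow> (\<exists>f. G_conditional R I f)"

end

theory Submission
  imports Defs
begin

definition Hc :: "('v set \<times> 'v set) list \<Rightarrow> 'v \<Rightarrow> 'v \<Rightarrow> 'v \<Rightarrow> bool" where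
  "Hc L a b c \<longleftrightarrow> (\<forall>p\<in>set L. (c \<in> fst p \<longleftrightarrow> a \<notin> snd p \<or> b \<in> fst p) \<and>
                               (c \<in> snd p \<longleftrightarrow> a \<notin> fst p \<or> b \<in> snd p))"

lemma flat_set: "D \<in> set (flat_list L) \<longleftrightarrow> (\<exists>p\<in>set L. D = fst p \<or> D = snd p)"
  unfolding flat_list_def by auto

lemma repr_R: "representation one zero R L \<Longrightarrow>
   R \<gamma> \<delta> \<longleftrightarrow> (\<forall>p\<in>set L. \<gamma> \<subseteq> fst p \<longrightarrow> \<delta> \<inter> snd p \<noteq> {})"
  unfolding representation_def inter_rel_def mixed_rel_def by auto

lemma remove_nth_mem:
  assumes "i < length L" "j < length L" "i \<noteq> j"
  shows "L ! j \<in> set (take i L @ drop (Suc i) L)"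
proof (cases "j < i")
  case True
  then have "take i L ! j = L ! j" by simp
  moreover have "j < length (take i L)" using True assms by simp
  ultimately show ?thesis by (metis Un_iff nth_mem set_append)
next
  case False
  then have j: "j > i" using assms by simp
  then have "drop (Suc i) L ! (j - Suc i) = L ! j" using assms by simp
  moreover have "j - Suc i < length (drop (Suc i) L)" using j assms by simp
  ultimately show ?thesis by (metis Un_iff nth_mem set_append)
qed

lemma min_antichain:
  assumes m: "minimal_representation one zero R L"
    and ij: "i < length L" "j < length L" "i \<noteq> j"
    and s1: "fst (L ! i) \<subseteq> fst (L ! j)" and s2: "snd (L ! j) \<subseteq> snd (L ! i)"
  shows False
proof -
  define L' where "L' = take i L @ drop (Suc i) L"
  have rep: "representation one zero R L" using m unfolding minimal_representation_def by simp
  have sub: "set L' \<subseteq> set L" unfolding L'_def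
    using set_take_subset set_drop_subset by fastforce
  have jin: "L ! j \<in> set L'" unfolding L'_def using remove_nth_mem[OF ij] .
  have sup: "set L \<subseteq> insert (L ! i) (set L')"
    using id_take_nth_drop[OF ij(1)] unfolding L'_def
    by (metis Un_insert_right insert_subset order_refl set_append set_simps(2) subset_insertI)
  have len: "length L' < length L" unfolding L'_def using ij by simp
  have "representation one zero R L'"
    unfolding representation_def
  proof (intro conjI)
    show "L' \<noteq> []" using jin by auto
    show "\<forall>p\<in>set L'. designated one zero (fst p) \<and> designated one zero (snd p)"
      using rep sub unfolding representation_def by blast
    have "inter_rel L = inter_rel L'"
    proof (intro ext)
      fix \<gamma> \<delta>
      show "inter_rel L \<gamma> \<delta> = inter_rel L' \<gamma> \<delta>"
      proof
        assume "inter_rel L \<gamma> \<delta>" then show "inter_rel L' \<gamma> \<delta>"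
          using sub unfolding inter_rel_def by blast
      next
        assume a: "inter_rel L' \<gamma> \<delta>"
        then have "mixed_rel (fst (L ! j)) (snd (L ! j)) \<gamma> \<delta>" using jin unfolding inter_rel_def by blast
        then have "mixed_rel (fst (L ! i)) (snd (L ! i)) \<gamma> \<delta>"
          using s1 s2 unfolding mixed_rel_def by blast
        then show "inter_rel L \<gamma> \<delta>" using a sup unfolding inter_rel_def by blast
      qed
    qed
    then show "R = inter_rel L'" using rep unfolding representation_def by simp
  qed
  then show False using m len unfolding minimal_representation_def by force
qed

lemma min_antichain_set:
  assumes m: "minimal_representation one zero R L"
    and pq: "p \<in> set L" "q \<in> set L" "fst p \<subseteq> fst q" "snd q \<subseteq> snd p"
  shows "p = q"
proof -
  obtain i j where "i < length L" "j < length L" "p = L ! i" "q = L ! j"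
    using pq by (metis in_set_conv_nth)
  then show ?thesis using min_antichain[OF m] pq by metis
qed


definition VC :: "('v set \<Rightarrow> 'v set \<Rightarrow> bool) \<Rightarrow> 'v \<Rightarrow> 'v \<Rightarrow> 'v \<Rightarrow> bool" where
  "VC R a b c \<longleftrightarrow> (\<forall>\<gamma> \<delta>. (R \<gamma> (insert c \<delta>) \<longleftrightarrow> R (insert a \<gamma>) (insert b \<delta>)) \<and>
       (R (insert c \<gamma>) \<delta> \<longleftrightarrow> R \<gamma> (insert a \<delta>) \<and> R (insert b \<gamma>) \<delta>))"

lemma H_to_VC:
  assumes rep: "representation one zero R L" and h: "Hc L a b c"
  shows "VC R a b c"
  using h unfolding VC_def Hc_def repr_R[OF rep] by blast

lemma VC_to_H:
  assumes m: "minimal_representation one zero R L" and vc: "VC R a b c"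
  shows "Hc L a b c"
  unfolding Hc_def
proof
  fix p assume p: "p \<in> set L"
  have rep: "representation one zero R L" using m unfolding minimal_representation_def by simp
  note RR = repr_R[OF rep]
  have anti: "\<And>q. q \<in> set L \<Longrightarrow> fst p \<subseteq> fst q \<Longrightarrow> snd q \<subseteq> snd p \<Longrightarrow> q = p"
    using min_antichain_set[OF m p] by metis
  have nR: "\<not> R (fst p) (- snd p)" using RR p by auto
  have v1: "\<And>\<gamma> \<delta>. R \<gamma> (insert c \<delta>) \<longleftrightarrow> R (insert a \<gamma>) (insert b \<delta>)"
   and v2: "\<And>\<gamma> \<delta>. R (insert c \<gamma>) \<delta> \<longleftrightarrow> R \<gamma> (insert a \<delta>) \<and> R (insert b \<gamma>) \<delta>"
    using vc unfolding VC_def by auto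
  have C1: "c \<in> snd p \<longleftrightarrow> a \<notin> fst p \<or> b \<in> snd p"
  proof
    assume c: "c \<in> snd p"
    show "a \<notin> fst p \<or> b \<in> snd p"
    proof (rule ccontr)
      assume "\<not> ?thesis"
      then have "\<not> R (insert a (fst p)) (insert b (- snd p))" using RR p by auto
      then have "\<not> R (fst p) (insert c (- snd p))" using v1 by blast
      then obtain q where q: "q \<in> set L" "fst p \<subseteq> fst q" "insert c (- snd p) \<inter> snd q = {}"
        using RR by blast
      then have "q = p" using anti by blast
      then show False using q c by auto
    qed
  next
    assume h: "a \<notin> fst p \<or> b \<in> snd p"
    show "c \<in> snd p"
    proof (rule ccontr)
      assume "c \<notin> snd p"
      then have "\<not> R (fst p) (insert c (- snd p))" using RR p by auto
      then have "\<not> R (insert a (fst p)) (insert b (- snd p))" using v1 by blast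
      then obtain q where q: "q \<in> set L" "insert a (fst p) \<subseteq> fst q" "insert b (- snd p) \<inter> snd q = {}"
        using RR by blast
      then have "q = p" using anti by blast
      then show False using q h by auto
    qed
  qed
  have C2: "c \<in> fst p \<longleftrightarrow> a \<notin> snd p \<or> b \<in> fst p"
  proof
    assume c: "c \<in> fst p"
    then have "\<not> R (insert c (fst p)) (- snd p)" using nR by (simp add: insert_absorb)
    then have "\<not> R (fst p) (insert a (- snd p)) \<or> \<not> R (insert b (fst p)) (- snd p)" using v2 by blast
    then show "a \<notin> snd p \<or> b \<in> fst p"
    proof
      assume "\<not> R (fst p) (insert a (- snd p))"
      then obtain q where q: "q \<in> set L" "fst p \<subseteq> fst q" "insert a (- snd p) \<inter> snd q = {}"
        using RR by blast
      then have "q = p" using anti by blast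
      then show ?thesis using q by auto
    next
      assume "\<not> R (insert b (fst p)) (- snd p)"
      then obtain q where q: "q \<in> set L" "insert b (fst p) \<subseteq> fst q" "(- snd p) \<inter> snd q = {}"
        using RR by blast
      then have "q = p" using anti by blast
      then show ?thesis using q by auto
    qed
  next
    assume h: "a \<notin> snd p \<or> b \<in> fst p"
    then have "\<not> R (fst p) (insert a (- snd p)) \<or> \<not> R (insert b (fst p)) (- snd p)"
      using RR p by auto
    then have "\<not> R (insert c (fst p)) (- snd p)" using v2 by blast
    then obtain q where q: "q \<in> set L" "insert c (fst p) \<subseteq> fst q" "(- snd p) \<inter> snd q = {}"
      using RR by blast
    then have "q = p" using anti by blast
    then show "c \<in> fst p" using q by auto
  qed
  show "(c \<in> fst p \<longleftrightarrow> a \<notin> snd p \<or> b \<in> fst p) \<and> (c \<in> snd p \<longleftrightarrow> a \<notin> fst p \<or> b \<in> snd p)"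
    using C1 C2 by blast
qed


lemma des_all:
  assumes rep: "representation one zero R L" and D: "D \<in> set (flat_list L)"
  shows "one \<in> D" "zero \<notin> D"
  using rep D unfolding representation_def designated_def flat_set by auto

definition rz :: "('v set \<times> 'v set) list \<Rightarrow> ('v set \<Rightarrow> bool) \<Rightarrow> bool" where
  "rz L q \<longleftrightarrow> (\<exists>x. \<forall>D\<in>set (flat_list L). (x \<in> D) = q D)"

context
  fixes one zero :: "'v::finite" and R L
  assumes rep: "representation one zero R L"
    and H: "\<And>a b. \<exists>c. Hc L a b c"
begin

lemma neg_ex: "\<exists>c. \<forall>p\<in>set L. (c \<in> fst p \<longleftrightarrow> a \<notin> snd p) \<and> (c \<in> snd p \<longleftrightarrow> a \<notin> fst p)"
proof -
  obtain c where c: "Hc L a zero c" using H by blast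
  have "\<forall>p\<in>set L. zero \<notin> fst p \<and> zero \<notin> snd p" using des_all(2)[OF rep] flat_set by blast
  then show ?thesis using c unfolding Hc_def by blast
qed

lemma join_ex: "\<exists>c. \<forall>p\<in>set L. (c \<in> fst p \<longleftrightarrow> a \<in> fst p \<or> b \<in> fst p) \<and> (c \<in> snd p \<longleftrightarrow> a \<in> snd p \<or> b \<in> snd p)"
proof -
  obtain n where n: "\<forall>p\<in>set L. (n \<in> fst p \<longleftrightarrow> a \<notin> snd p) \<and> (n \<in> snd p \<longleftrightarrow> a \<notin> fst p)"
    using neg_ex by blast
  obtain c where c: "Hc L n b c" using H by blast
  show ?thesis using n c unfolding Hc_def by blast
qed

lemma meet_ex: "\<exists>c. \<forall>p\<in>set L. (c \<in> fst p \<longleftrightarrow> a \<in> fst p \<and> b \<in> fst p) \<and> (c \<in> snd p \<longleftrightarrow> a \<in> snd p \<and> b \<in> snd p)"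
proof -
  obtain n where n: "\<forall>p\<in>set L. (n \<in> fst p \<longleftrightarrow> b \<notin> snd p) \<and> (n \<in> snd p \<longleftrightarrow> b \<notin> fst p)"
    using neg_ex by blast
  obtain c where c: "Hc L a n c" using H by blast
  obtain d where d: "\<forall>p\<in>set L. (d \<in> fst p \<longleftrightarrow> c \<notin> snd p) \<and> (d \<in> snd p \<longleftrightarrow> c \<notin> fst p)"
    using neg_ex by blast
  show ?thesis using n c d unfolding Hc_def by blast
qed

lemma rz_or: "rz L q1 \<Longrightarrow> rz L q2 \<Longrightarrow> rz L (\<lambda>D. q1 D \<or> q2 D)"
proof -
  assume "rz L q1" "rz L q2"
  then obtain x y where x: "\<forall>D\<in>set (flat_list L). (x \<in> D) = q1 D"
    and y: "\<forall>D\<in>set (flat_list L). (y \<in> D) = q2 D" unfolding rz_def by blast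
  obtain c where "\<forall>p\<in>set L. (c \<in> fst p \<longleftrightarrow> x \<in> fst p \<or> y \<in> fst p) \<and> (c \<in> snd p \<longleftrightarrow> x \<in> snd p \<or> y \<in> snd p)"
    using join_ex by blast
  then have "\<forall>D\<in>set (flat_list L). (c \<in> D) = (x \<in> D \<or> y \<in> D)" using flat_set by metis
  then show ?thesis unfolding rz_def using x y by metis
qed

lemma rz_and: "rz L q1 \<Longrightarrow> rz L q2 \<Longrightarrow> rz L (\<lambda>D. q1 D \<and> q2 D)"
proof -
  assume "rz L q1" "rz L q2"
  then obtain x y where x: "\<forall>D\<in>set (flat_list L). (x \<in> D) = q1 D"
    and y: "\<forall>D\<in>set (flat_list L). (y \<in> D) = q2 D" unfolding rz_def by blast
  obtain c where "\<forall>p\<in>set L. (c \<in> fst p \<longleftrightarrow> x \<in> fst p \<and> y \<in> fst p) \<and> (c \<in> snd p \<longleftrightarrow> x \<in> snd p \<and> y \<in> snd p)"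
    using meet_ex by blast
  then have "\<forall>D\<in>set (flat_list L). (c \<in> D) = (x \<in> D \<and> y \<in> D)" using flat_set by metis
  then show ?thesis unfolding rz_def using x y by metis
qed

lemma rz_all: "finite A \<Longrightarrow> rz L (\<lambda>D. \<forall>y\<in>A. y \<in> D)"
proof (induction A rule: finite_induct)
  case empty
  show ?case unfolding rz_def using des_all(1)[OF rep] by auto
next
  case (insert y A)
  have "rz L (\<lambda>D. y \<in> D)" unfolding rz_def by blast
  from rz_and[OF this insert.IH] show ?case by simp
qed

lemma rz_ex: "finite S \<Longrightarrow> (\<And>D'. D' \<in> S \<Longrightarrow> rz L (Q D')) \<Longrightarrow> rz L (\<lambda>D. \<exists>D'\<in>S. Q D' D)"
proof (induction S rule: finite_induct)
  case empty
  show ?case unfolding rz_def using des_all(2)[OF rep] by auto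
next
  case (insert y S)
  have "rz L (Q y)" using insert.prems by simp
  from rz_or[OF this insert.IH] insert.prems show ?case by simp
qed

lemma get_DC2: "DC2 L"
  unfolding DC2_def
proof (intro allI impI)
  fix S assume S: "S \<noteq> {} \<and> S \<subseteq> set (flat_list L)"
  have fS: "finite S" using S finite_subset by blast
  have "rz L (\<lambda>D. \<exists>D'\<in>S. \<forall>y\<in>D'. y \<in> D)"
    by (rule rz_ex[OF fS]) (rule rz_all, simp)
  then show "\<exists>x. \<forall>D\<in>set (flat_list L). (x \<in> D) = (\<exists>D'\<in>S. D' \<subseteq> D)"
    unfolding rz_def subset_eq .
qed

lemma get_DC1: "DC1 L"
  unfolding DC1_def
proof
  fix D assume D: "D \<in> set (flat_list L)"
  show "(\<exists>x\<in>D. \<forall>D'\<in>set (flat_list L). D' \<noteq> D \<longrightarrow> x \<notin> D') \<or>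
        (\<exists>D'\<in>set (flat_list L). D' \<noteq> D \<and> D \<subseteq> D')"
  proof (cases "\<exists>D'\<in>set (flat_list L). D' \<noteq> D \<and> D \<subseteq> D'")
    case False
    obtain x where x: "\<forall>D''\<in>set (flat_list L). (x \<in> D'') = (\<exists>D'\<in>{D}. D' \<subseteq> D'')"
      using get_DC2 D unfolding DC2_def by (metis empty_not_insert empty_subsetI insert_subset)
    then have "x \<in> D" using D by auto
    moreover have "\<forall>D'\<in>set (flat_list L). D' \<noteq> D \<longrightarrow> x \<notin> D'" using x False by auto
    ultimately show ?thesis by blast
  qed blast
qed

lemma get_N2: "N2 L"
  unfolding N2_def
proof (intro allI impI conjI)
  fix i j assume ij: "i < length L" "j < length L"
  then have pi: "L ! i \<in> set L" and pj: "L ! j \<in> set L" by auto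
  show "fst (L ! i) \<subseteq> snd (L ! j) \<Longrightarrow> fst (L ! j) \<subseteq> snd (L ! i)"
  proof
    fix y assume s: "fst (L ! i) \<subseteq> snd (L ! j)" and y: "y \<in> fst (L ! j)"
    obtain z where z: "\<forall>p\<in>set L. (z \<in> fst p \<longleftrightarrow> y \<notin> snd p) \<and> (z \<in> snd p \<longleftrightarrow> y \<notin> fst p)"
      using neg_ex by blast
    show "y \<in> snd (L ! i)" using z pi pj s y by blast
  qed
  show "snd (L ! j) \<subseteq> fst (L ! i) \<Longrightarrow> snd (L ! i) \<subseteq> fst (L ! j)"
  proof
    fix y assume s: "snd (L ! j) \<subseteq> fst (L ! i)" and y: "y \<in> snd (L ! i)"
    obtain z where z: "\<forall>p\<in>set L. (z \<in> fst p \<longleftrightarrow> y \<notin> snd p) \<and> (z \<in> snd p \<longleftrightarrow> y \<notin> fst p)"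
      using neg_ex by blast
    show "y \<in> fst (L ! j)" using z pi pj s y by blast
  qed
qed

lemma get_N1:
  assumes m: "minimal_representation one zero R L"
  shows "N1 L"
  unfolding N1_def
proof (intro allI impI conjI)
  fix i j assume ij: "i < length L" "j < length L" "i \<noteq> j"
  then have pi: "L ! i \<in> set L" and pj: "L ! j \<in> set L" by auto
  show "\<not> fst (L ! i) \<subseteq> fst (L ! j)"
  proof
    assume s: "fst (L ! i) \<subseteq> fst (L ! j)"
    have "\<not> snd (L ! j) \<subseteq> snd (L ! i)" using min_antichain[OF m ij] s by blast
    then obtain y where y: "y \<in> snd (L ! j)" "y \<notin> snd (L ! i)" by blast
    obtain z where z: "\<forall>p\<in>set L. (z \<in> fst p \<longleftrightarrow> y \<notin> snd p) \<and> (z \<in> snd p \<longleftrightarrow> y \<notin> fst p)"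
      using neg_ex by blast
    show False using z pi pj s y by blast
  qed
  show "\<not> snd (L ! i) \<subseteq> snd (L ! j)"
  proof
    assume s: "snd (L ! i) \<subseteq> snd (L ! j)"
    have "\<not> fst (L ! j) \<subseteq> fst (L ! i)" using min_antichain[OF m ij(2,1)] ij(3) s by blast
    then obtain y where y: "y \<in> fst (L ! j)" "y \<notin> fst (L ! i)" by blast
    obtain z where z: "\<forall>p\<in>set L. (z \<in> fst p \<longleftrightarrow> y \<notin> snd p) \<and> (z \<in> snd p \<longleftrightarrow> y \<notin> fst p)"
      using neg_ex by blast
    show False using z pi pj s y by blast
  qed
qed

end

lemma conds_to_H:
  assumes rep: "representation one zero R L" and dc2: "DC2 L" and n1: "N1 L" and n2: "N2 L"
  shows "\<exists>c. Hc L a b c"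
proof -
  define T where "T D \<longleftrightarrow> (\<exists>p\<in>set L. (D = fst p \<and> (a \<notin> snd p \<or> b \<in> fst p)) \<or>
                                    (D = snd p \<and> (a \<notin> fst p \<or> b \<in> snd p)))" for D
  define S where "S = {D \<in> set (flat_list L). T D}"
  show ?thesis
  proof (cases "S = {}")
    case True
    have "Hc L a b zero"
      unfolding Hc_def
    proof
      fix p assume p: "p \<in> set L"
      then have "fst p \<in> set (flat_list L)" "snd p \<in> set (flat_list L)" using flat_set by blast+
      then have "zero \<notin> fst p" "zero \<notin> snd p" "\<not> T (fst p)" "\<not> T (snd p)"
        using des_all(2)[OF rep] True unfolding S_def by auto
      then show "(zero \<in> fst p \<longleftrightarrow> a \<notin> snd p \<or> b \<in> fst p) \<and> (zero \<in> snd p \<longleftrightarrow> a \<notin> fst p \<or> b \<in> snd p)"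
        using p unfolding T_def by blast
    qed
    then show ?thesis by blast
  next
    case False
    then have Sne: "S \<noteq> {} \<and> S \<subseteq> set (flat_list L)" unfolding S_def by blast
    obtain x where x: "\<forall>D\<in>set (flat_list L). (x \<in> D) = (\<exists>D'\<in>S. D' \<subseteq> D)"
      using dc2[unfolded DC2_def, rule_format, OF Sne] by blast
    have "Hc L a b x"
      unfolding Hc_def
    proof
      fix p assume p: "p \<in> set L"
      then obtain k where k: "k < length L" "p = L ! k" by (metis in_set_conv_nth)
      have fp: "fst p \<in> set (flat_list L)" "snd p \<in> set (flat_list L)" using p flat_set by blast+
      have A: "x \<in> fst p \<longleftrightarrow> a \<notin> snd p \<or> b \<in> fst p"
      proof
        assume "x \<in> fst p"
        then obtain D' where D': "D' \<in> S" "D' \<subseteq> fst p" using x fp by blast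
        from D'(1) have "T D'" unfolding S_def by simp
        then obtain q where q: "q \<in> set L" "(D' = fst q \<and> (a \<notin> snd q \<or> b \<in> fst q)) \<or>
                                    (D' = snd q \<and> (a \<notin> fst q \<or> b \<in> snd q))"
          unfolding T_def by blast
        then obtain j where j: "j < length L" "q = L ! j" by (metis in_set_conv_nth)
        from q(2) show "a \<notin> snd p \<or> b \<in> fst p"
        proof
          assume h: "D' = fst q \<and> (a \<notin> snd q \<or> b \<in> fst q)"
          have "fst (L ! j) \<subseteq> fst (L ! k)" using h D' j k by simp
          then have "j = k" using n1 j k unfolding N1_def by blast
          then show ?thesis using h j k by simp
        next
          assume h: "D' = snd q \<and> (a \<notin> fst q \<or> b \<in> snd q)"
          then have "snd (L ! j) \<subseteq> fst (L ! k)" using D' j k by simp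
          then have "snd (L ! k) \<subseteq> fst (L ! j)" using n2 j k unfolding N2_def by blast
          then have "snd p \<subseteq> fst q" using j k by simp
          then show ?thesis using h D' by blast
        qed
      next
        assume "a \<notin> snd p \<or> b \<in> fst p"
        then have "fst p \<in> S" unfolding S_def T_def using p fp by blast
        then show "x \<in> fst p" using x fp by blast
      qed
      have B: "x \<in> snd p \<longleftrightarrow> a \<notin> fst p \<or> b \<in> snd p"
      proof
        assume "x \<in> snd p"
        then obtain D' where D': "D' \<in> S" "D' \<subseteq> snd p" using x fp by blast
        from D'(1) have "T D'" unfolding S_def by simp
        then obtain q where q: "q \<in> set L" "(D' = fst q \<and> (a \<notin> snd q \<or> b \<in> fst q)) \<or>
                                    (D' = snd q \<and> (a \<notin> fst q \<or> b \<in> snd q))"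
          unfolding T_def by blast
        then obtain j where j: "j < length L" "q = L ! j" by (metis in_set_conv_nth)
        from q(2) show "a \<notin> fst p \<or> b \<in> snd p"
        proof
          assume h: "D' = snd q \<and> (a \<notin> fst q \<or> b \<in> snd q)"
          have "snd (L ! j) \<subseteq> snd (L ! k)" using h D' j k by simp
          then have "j = k" using n1 j k unfolding N1_def by blast
          then show ?thesis using h j k by simp
        next
          assume h: "D' = fst q \<and> (a \<notin> snd q \<or> b \<in> fst q)"
          then have "fst (L ! j) \<subseteq> snd (L ! k)" using D' j k by simp
          then have "fst (L ! k) \<subseteq> snd (L ! j)" using n2 j k unfolding N2_def by blast
          then have "fst p \<subseteq> snd q" using j k by simp
          then show ?thesis using h D' by blast
        qed
      next
        assume "a \<notin> fst p \<or> b \<in> snd p"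
        then have "snd p \<in> S" unfolding S_def T_def using p fp by blast
        then show "x \<in> snd p" using x fp by blast
      qed
      show "(x \<in> fst p \<longleftrightarrow> a \<notin> snd p \<or> b \<in> fst p) \<and> (x \<in> snd p \<longleftrightarrow> a \<notin> fst p \<or> b \<in> snd p)"
        using A B by blast
    qed
    then show ?thesis by blast
  qed
qed

lemma G_iff_VC:
  assumes ce: "constant_expressive I"
  shows "G_conditional R I f \<longleftrightarrow> (\<forall>a b. VC R a b (f a b))"
proof
  obtain \<kappa> where \<kappa>: "\<And>x f v. eval I f v (\<kappa> x) = x"
    using ce unfolding constant_expressive_def by metis
  have im: "\<And>f v A. eval I f v ` (\<kappa> ` A) = A"
    using \<kappa> by (auto simp: image_image)
  have ent: "\<And>A B. entails R I f (\<kappa> ` A) (\<kappa> ` B) \<longleftrightarrow> R A B"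
    unfolding entails_def using im by simp
  assume G: "G_conditional R I f"
  show "\<forall>a b. VC R a b (f a b)"
    unfolding VC_def
  proof (intro allI conjI)
    fix a b \<gamma> \<delta>
    have e: "eval I f v (Imp (\<kappa> a) (\<kappa> b)) = f a b" for v using \<kappa> by simp
    have g1: "entails R I f (\<kappa> ` \<gamma>) ({Imp (\<kappa> a) (\<kappa> b)} \<union> \<kappa> ` \<delta>) \<longleftrightarrow>
        entails R I f (\<kappa> ` \<gamma> \<union> {\<kappa> a}) ({\<kappa> b} \<union> \<kappa> ` \<delta>)"
      and g2: "entails R I f (\<kappa> ` \<gamma> \<union> {Imp (\<kappa> a) (\<kappa> b)}) (\<kappa> ` \<delta>) \<longleftrightarrow>
        (entails R I f (\<kappa> ` \<gamma>) ({\<kappa> a} \<union> \<kappa> ` \<delta>) \<and> entails R I f (\<kappa> ` \<gamma> \<union> {\<kappa> b}) (\<kappa> ` \<delta>))"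
      using G unfolding G_conditional_def by blast+
    show "R \<gamma> (insert (f a b) \<delta>) = R (insert a \<gamma>) (insert b \<delta>)"
      using g1 unfolding entails_def by (simp add: image_Un im e \<kappa>)
    show "R (insert (f a b) \<gamma>) \<delta> = (R \<gamma> (insert a \<delta>) \<and> R (insert b \<gamma>) \<delta>)"
      using g2 unfolding entails_def by (simp add: image_Un im e \<kappa>)
  qed
next
  assume "\<forall>a b. VC R a b (f a b)"
  then show "G_conditional R I f"
    unfolding G_conditional_def entails_def VC_def by (simp add: image_Un all_conj_distrib)
qed

lemma exists_minimal:
  assumes "intersective_mixed one zero R"
  shows "\<exists>L. minimal_representation one zero R L"
proof -
  obtain L0 where "representation one zero R L0" using assms unfolding intersective_mixed_def by blast
  then have ex: "\<exists>n L. representation one zero R L \<and> length L = n" by blast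
  define n where "n = (LEAST n. \<exists>L. representation one zero R L \<and> length L = n)"
  obtain L where L: "representation one zero R L" "length L = n"
    using LeastI_ex[OF ex] unfolding n_def by blast
  have "\<forall>L'. representation one zero R L' \<longrightarrow> length L \<le> length L'"
    using L(2) unfolding n_def by (metis (mono_tags, lifting) Least_le)
  then show ?thesis using L(1) unfolding minimal_representation_def by blast
qed

theorem theorem7p9:
  fixes R :: "('v::finite) set \<Rightarrow> 'v set \<Rightarrow> bool"
    and I :: "'c \<Rightarrow> 'v list \<Rightarrow> 'v"
    and one zero :: 'v
  assumes "one \<noteq> zero"
    and "intersective_mixed one zero R"
    and "constant_expressive I"
  shows "admits_G_conditional R I \<longleftrightarrow>
    (\<forall>L. minimal_representation one zero R L \<longrightarrow> DC1 L \<and> DC2 L \<and> N1 L \<and> N2 L)"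
proof
  assume "admits_G_conditional R I"
  then obtain f where "G_conditional R I f" unfolding admits_G_conditional_def by blast
  then have vc: "\<And>a b. VC R a b (f a b)" using G_iff_VC[OF assms(3)] by blast
  show "\<forall>L. minimal_representation one zero R L \<longrightarrow> DC1 L \<and> DC2 L \<and> N1 L \<and> N2 L"
  proof (intro allI impI)
    fix L assume m: "minimal_representation one zero R L"
    have rep: "representation one zero R L" using m unfolding minimal_representation_def by simp
    have H: "\<And>a b. \<exists>c. Hc L a b c" using VC_to_H[OF m vc] by blast
    show "DC1 L \<and> DC2 L \<and> N1 L \<and> N2 L"
      using get_DC1[OF rep H] get_DC2[OF rep H] get_N1[OF rep H m] get_N2[OF rep H] by blast
  qed
next
  assume c: "\<forall>L. minimal_representation one zero R L \<longrightarrow> DC1 L \<and> DC2 L \<and> N1 L \<and> N2 L"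
  obtain L where m: "minimal_representation one zero R L" using exists_minimal[OF assms(2)] by blast
  have rep: "representation one zero R L" using m unfolding minimal_representation_def by simp
  have H: "\<And>a b. \<exists>c. Hc L a b c" using conds_to_H[OF rep] c m by blast
  define f where "f a b = (SOME c. Hc L a b c)" for a b
  have "\<And>a b. Hc L a b (f a b)" unfolding f_def using H by (metis someI_ex)
  then have "\<forall>a b. VC R a b (f a b)" using H_to_VC[OF rep] by blast
  then have "G_conditional R I f" using G_iff_VC[OF assms(3)] by blast
  then show "admits_G_conditional R I" unfolding admits_G_conditional_def by blast
qed

end
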